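(* Let $\Gamma$ act ergodically by measure preserving maps on a probability space $(X,\mu)$. Let $S$ be a finite symmetric generating set of $\Gamma$, let $H$ be a subgroup of $\Gamma$ of index $k$, let $C$ be a right coset representative system for $H$ in $\Gamma$ and let $T=N(S,C)$. Then for every measurable $A\subseteq X$ with $0<\mu(A)\le 1/(2k)$, $$\frac{\mu(AT\setminus A)}{\mu(A)}\ge\frac{\mathrm{h}(X,S)}{k}.$$
   Context: Actions are right actions; $AS=\{as: a\in A, s\in S\}$. Cheeger constant: $\mathrm{h}(X,S)=\inf\{\mu(AS\setminus A)/\mu(A): 0<\mu(A)\le1/2\}$. Nielsen–Schreier set: for $s\in S$, $c\in C$ let $p_{c,s}\in C$ be the unique element with $csp_{c,s}^{-1}\in H$; $N(S,C)=\{csp_{c,s}^{-1}: s\in S, c\in C\}$. *)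

theory Defs
  imports "HOL-Probability.Probability" "HOL-Algebra.Coset" "HOL-Algebra.Generated_Groups"
begin

definition right_mp_action :: "('g, 'b) monoid_scheme \<Rightarrow> 'x measure \<Rightarrow> ('x \<Rightarrow> 'g \<Rightarrow> 'x) \<Rightarrow> bool" where
  "right_mp_action G M act \<longleftrightarrow>
     (\<forall>x\<in>space M. \<forall>g\<in>carrier G. act x g \<in> space M) \<and>
     (\<forall>x\<in>space M. act x \<one>\<^bsub>G\<^esub> = x) \<and>
     (\<forall>x\<in>space M. \<forall>g\<in>carrier G. \<forall>h\<in>carrier G. act (act x g) h = act x (g \<otimes>\<^bsub>G\<^esub> h)) \<and>
     (\<forall>g\<in>carrier G. (\<lambda>x. act x g) \<in> measurable M M \<and>
        (\<forall>A\<in>sets M. emeasure M ((\<lambda>x. act x g) -` A \<inter> space M) = emeasure M A))"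

definition set_act :: "('x \<Rightarrow> 'g \<Rightarrow> 'x) \<Rightarrow> 'x set \<Rightarrow> 'g set \<Rightarrow> 'x set" where
  "set_act act A T = {act a t | a t. a \<in> A \<and> t \<in> T}"

definition ergodic_action :: "('g, 'b) monoid_scheme \<Rightarrow> 'x measure \<Rightarrow> ('x \<Rightarrow> 'g \<Rightarrow> 'x) \<Rightarrow> bool" where
  "ergodic_action G M act \<longleftrightarrow>
     (\<forall>A\<in>sets M. (\<forall>g\<in>carrier G. set_act act A {g} = A) \<longrightarrow> measure M A = 0 \<or> measure M A = 1)"

definition cheeger :: "'x measure \<Rightarrow> ('x \<Rightarrow> 'g \<Rightarrow> 'x) \<Rightarrow> 'g set \<Rightarrow> real" where
  "cheeger M act S = Inf {measure M (set_act act A S - A) / measure M A | A.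
       A \<in> sets M \<and> 0 < measure M A \<and> measure M A \<le> 1/2}"

definition right_transversal :: "('g, 'b) monoid_scheme \<Rightarrow> 'g set \<Rightarrow> 'g set \<Rightarrow> bool" where
  "right_transversal G H C \<longleftrightarrow> C \<subseteq> carrier G \<and>
     (\<forall>g\<in>carrier G. \<exists>!c. c \<in> C \<and> H #>\<^bsub>G\<^esub> c = H #>\<^bsub>G\<^esub> g)"

definition ns_p :: "('g, 'b) monoid_scheme \<Rightarrow> 'g set \<Rightarrow> 'g set \<Rightarrow> 'g \<Rightarrow> 'g \<Rightarrow> 'g" where
  "ns_p G H C c s = (THE p. p \<in> C \<and> c \<otimes>\<^bsub>G\<^esub> s \<otimes>\<^bsub>G\<^esub> inv\<^bsub>G\<^esub> p \<in> H)"

definition NS_set :: "('g, 'b) monoid_scheme \<Rightarrow> 'g set \<Rightarrow> 'g set \<Rightarrow> 'g set \<Rightarrow> 'g set" where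
  "NS_set G H S C = {c \<otimes>\<^bsub>G\<^esub> s \<otimes>\<^bsub>G\<^esub> inv\<^bsub>G\<^esub> (ns_p G H C c s) | s c. s \<in> S \<and> c \<in> C}"

end

theory Submission
  imports Defs
begin

lemma coset_iff:
  fixes G (structure)
  assumes G: "group G" and H: "subgroup H G" and g: "g \<in> carrier G" and p: "p \<in> carrier G"
  shows "g \<otimes>\<^bsub>G\<^esub> inv\<^bsub>G\<^esub> p \<in> H \<longleftrightarrow> H #>\<^bsub>G\<^esub> p = H #>\<^bsub>G\<^esub> g"
proof -
  interpret group G by fact
  interpret subgroup H G by fact
  show ?thesis
  proof
    assume "g \<otimes> inv p \<in> H"
    hence "g \<in> H #> p" using rcos_module[OF G p g] by simp
    thus "H #> p = H #> g" using repr_independence[OF _ p H] by blast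
  next
    assume "H #> p = H #> g"
    hence "g \<in> H #> p" using rcos_self[OF g H] by simp
    thus "g \<otimes> inv p \<in> H" using rcos_module[OF G p g] by simp
  qed
qed

lemma ns_p_prop:
  fixes G (structure)
  assumes G: "group G" and H: "subgroup H G" and T: "right_transversal G H C"
    and c: "c \<in> carrier G" and s: "s \<in> carrier G"
  shows "ns_p G H C c s \<in> C \<and> c \<otimes>\<^bsub>G\<^esub> s \<otimes>\<^bsub>G\<^esub> inv\<^bsub>G\<^esub> (ns_p G H C c s) \<in> H"
proof -
  interpret group G by fact
  have g: "c \<otimes> s \<in> carrier G" using c s by simp
  have CG: "C \<subseteq> carrier G" using T unfolding right_transversal_def by blast
  from T g obtain p where p: "p \<in> C" "H #> p = H #> (c \<otimes> s)"
    and u: "\<And>q. q \<in> C \<Longrightarrow> H #> q = H #> (c \<otimes> s) \<Longrightarrow> q = p"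
    unfolding right_transversal_def by metis
  have eq: "\<And>q. q \<in> C \<Longrightarrow> (c \<otimes> s \<otimes> inv q \<in> H) = (H #> q = H #> (c \<otimes> s))"
    using coset_iff[OF G H g] CG by blast
  have "\<exists>!q. q \<in> C \<and> c \<otimes> s \<otimes> inv q \<in> H"
    using p u eq by metis
  thus ?thesis unfolding ns_p_def by (rule theI')
qed

lemma img_eq:
  fixes G (structure)
  assumes G: "group G" and R: "right_mp_action G M act" and g: "g \<in> carrier G" and A: "A \<subseteq> space M"
  shows "set_act act A {g} = (\<lambda>x. act x (inv\<^bsub>G\<^esub> g)) -` A \<inter> space M"
proof -
  interpret group G by fact
  from R have sp: "\<And>x g. x\<in>space M \<Longrightarrow> g\<in>carrier G \<Longrightarrow> act x g \<in> space M"
    and one: "\<And>x. x\<in>space M \<Longrightarrow> act x \<one> = x"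
    and mul: "\<And>x g h. x\<in>space M \<Longrightarrow> g\<in>carrier G \<Longrightarrow> h\<in>carrier G \<Longrightarrow> act (act x g) h = act x (g \<otimes> h)"
    unfolding right_mp_action_def by blast+
  show ?thesis
  proof (intro equalityI subsetI)
    fix y assume "y \<in> set_act act A {g}"
    then obtain a where a: "a \<in> A" "y = act a g" unfolding set_act_def by blast
    with A have as: "a \<in> space M" by blast
    have "act y (inv g) = a" using a as g by (simp add: mul one)
    then show "y \<in> (\<lambda>x. act x (inv g)) -` A \<inter> space M" using a as g sp by auto
  next
    fix y assume y: "y \<in> (\<lambda>x. act x (inv g)) -` A \<inter> space M"
    hence "act (act y (inv g)) g = y" using g by (simp add: mul one)
    thus "y \<in> set_act act A {g}" using y unfolding set_act_def by force
  qed
qed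

lemma img_sets:
  fixes G (structure)
  assumes G: "group G" and R: "right_mp_action G M act" and g: "g \<in> carrier G" and A: "A \<in> sets M"
  shows "set_act act A {g} \<in> sets M" "measure M (set_act act A {g}) = measure M A"
proof -
  interpret group G by fact
  have ig: "inv g \<in> carrier G" using g by simp
  have m: "(\<lambda>x. act x (inv g)) \<in> measurable M M"
   and e: "emeasure M ((\<lambda>x. act x (inv g)) -` A \<inter> space M) = emeasure M A"
    using R ig A unfolding right_mp_action_def by blast+
  have eq: "set_act act A {g} = (\<lambda>x. act x (inv g)) -` A \<inter> space M"
    using img_eq[OF G R g] sets.sets_into_space[OF A] by blast
  show "set_act act A {g} \<in> sets M" using eq measurable_sets[OF m A] by simp
  show "measure M (set_act act A {g}) = measure M A" using eq e by (simp add: measure_def)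
qed

lemma set_act_UN: "set_act act A T = (\<Union>t\<in>T. set_act act A {t})"
  unfolding set_act_def by blast

lemma main_aux:
  fixes G :: "('g, 'b) monoid_scheme" (structure) and M :: "'x measure" and act :: "'x \<Rightarrow> 'g \<Rightarrow> 'x"
    and S H C :: "'g set" and k :: nat
  assumes "group G"
    and "prob_space M"
    and "right_mp_action G M act"
    and "ergodic_action G M act"
    and "finite S" and "S \<subseteq> carrier G" and "\<forall>s\<in>S. inv\<^bsub>G\<^esub> s \<in> S"
    and "generate G S = carrier G"
    and "subgroup H G"
    and "finite (rcosets\<^bsub>G\<^esub> H)" and "card (rcosets\<^bsub>G\<^esub> H) = k"
    and "right_transversal G H C"
  shows "\<forall>A\<in>sets M. 0 < measure M A \<and> measure M A \<le> 1 / (2 * real k) \<longrightarrow>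
           measure M (set_act act A (NS_set G H S C) - A) / measure M A \<ge> cheeger M act S / real k"
proof (intro ballI impI)
  note G = assms(1) and R = assms(3) and H = assms(9) and Tr = assms(12)
  interpret group G by fact
  interpret prob_space M by fact
  fix A assume A: "A \<in> sets M" and Am: "0 < measure M A \<and> measure M A \<le> 1 / (2 * real k)"
  have CG: "C \<subseteq> carrier G" using Tr unfolding right_transversal_def by blast
  have HG: "H \<subseteq> carrier G" using H by (rule subgroup.subset)
  have injC: "inj_on (\<lambda>c. H #> c) C"
  proof (rule inj_onI)
    fix c d assume cd: "c \<in> C" "d \<in> C" "H #> c = H #> d"
    then have "d \<in> carrier G" using CG by blast
    with Tr obtain p where "\<And>q. q \<in> C \<and> H #> q = H #> d \<Longrightarrow> q = p"
      unfolding right_transversal_def by metis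
    with cd show "c = d" by metis
  qed
  have imC: "(\<lambda>c. H #> c) ` C \<subseteq> rcosets H"
    using CG HG by (auto intro: rcosetsI)
  have finC: "finite C" using injC imC assms(10) finite_imageD finite_subset by blast
  have cardC: "card C \<le> k" using card_inj_on_le[OF injC imC assms(10)] assms(11) by simp
  obtain c0 where c0: "c0 \<in> C"
    using Tr one_closed unfolding right_transversal_def by blast
  define T where "T = NS_set G H S C"
  have pC: "\<And>c s. c \<in> C \<Longrightarrow> s \<in> S \<Longrightarrow> ns_p G H C c s \<in> C \<and> c \<otimes> s \<otimes> inv (ns_p G H C c s) \<in> H"
    using ns_p_prop[OF G H Tr] CG assms(6) by blast
  have TG: "T \<subseteq> carrier G"
  proof
    fix t assume "t \<in> T"
    then obtain s c where "s \<in> S" "c \<in> C" "t = c \<otimes> s \<otimes> inv (ns_p G H C c s)"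
      unfolding T_def NS_set_def by blast
    thus "t \<in> carrier G" using pC[of c s] CG assms(6) by blast
  qed
  have finT: "finite T"
  proof -
    have "T = (\<lambda>(s,c). c \<otimes> s \<otimes> inv (ns_p G H C c s)) ` (S \<times> C)"
      unfolding T_def NS_set_def by auto
    thus ?thesis using assms(5) finC by simp
  qed
  have Asp: "A \<subseteq> space M" using A sets.sets_into_space by blast
  have ATs: "set_act act A T \<in> sets M"
    unfolding set_act_UN[of act A T] using finT TG img_sets[OF G R _ A] by blast
  define D where "D = set_act act A T - A"
  have Ds: "D \<in> sets M" unfolding D_def using ATs A by blast
  define B where "B = set_act act A C"
  have Bs: "B \<in> sets M"
    unfolding B_def set_act_UN[of act A C] using finC CG img_sets[OF G R _ A] by blast
  have Bsp: "B \<subseteq> space M" using Bs sets.sets_into_space by blast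
  have BSs: "set_act act B S \<in> sets M"
    unfolding set_act_UN[of act B S] using assms(5,6) img_sets[OF G R _ Bs] by blast
  have muB_le: "measure M B \<le> real k * measure M A"
  proof -
    have "measure M B \<le> (\<Sum>c\<in>C. measure M (set_act act A {c}))"
      unfolding B_def set_act_UN[of act A C]
      by (rule measure_UNION_le) (use finC CG img_sets[OF G R _ A] in auto)
    also have "\<dots> = real (card C) * measure M A"
    proof -
      have "(\<Sum>c\<in>C. measure M (set_act act A {c})) = (\<Sum>c\<in>C. measure M A)"
        by (rule sum.cong) (use CG img_sets(2)[OF G R _ A] in auto)
      thus ?thesis by simp
    qed
    also have "\<dots> \<le> real k * measure M A"
      using cardC Am by (intro mult_right_mono) auto
    finally show ?thesis .
  qed
  have muB_ge: "measure M A \<le> measure M B"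
  proof -
    have "set_act act A {c0} \<subseteq> B" unfolding B_def set_act_def using c0 by blast
    hence "measure M (set_act act A {c0}) \<le> measure M B"
      using Bs by (intro finite_measure_mono) auto
    thus ?thesis using img_sets(2)[OF G R _ A] c0 CG by auto
  qed
  have kpos: "real k > 0"
  proof -
    have "H #> c0 \<in> rcosets H" using imC c0 by blast
    hence "k \<noteq> 0" using assms(10,11) by (metis card_0_eq empty_iff)
    thus ?thesis by simp
  qed
  have muB_half: "measure M B \<le> 1/2"
  proof -
    have "real k * measure M A \<le> real k * (1 / (2 * real k))"
      using Am kpos by (intro mult_left_mono) auto
    also have "\<dots> = 1/2" using kpos by simp
    finally show ?thesis using muB_le by simp
  qed
  have incl: "set_act act B S - B \<subseteq> (\<Union>p\<in>C. set_act act D {p})"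
  proof
    fix x assume x: "x \<in> set_act act B S - B"
    then obtain b s where bs: "b \<in> B" "s \<in> S" "x = act b s" unfolding set_act_def by blast
    then obtain a c where ac: "a \<in> A" "c \<in> C" "b = act a c" unfolding B_def set_act_def by blast
    define p where "p = ns_p G H C c s"
    define t where "t = c \<otimes> s \<otimes> inv p"
    have pc: "p \<in> C" "t \<in> H" using pC[OF ac(2) bs(2)] unfolding p_def t_def by auto
    have tT: "t \<in> T" unfolding T_def NS_set_def t_def p_def using ac bs by blast
    have cc: "c \<in> carrier G" "s \<in> carrier G" "p \<in> carrier G"
      using ac bs pc CG assms(6) by auto
    have asp: "a \<in> space M" using ac Asp by blast
    from R have mul: "\<And>x g h. x\<in>space M \<Longrightarrow> g\<in>carrier G \<Longrightarrow> h\<in>carrier G \<Longrightarrow> act (act x g) h = act x (g \<otimes> h)"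
      unfolding right_mp_action_def by blast
    have "t \<otimes> p = c \<otimes> s" unfolding t_def using cc by (simp add: m_assoc)
    hence xe: "x = act (act a t) p"
    proof -
      have tc: "t \<in> carrier G" using TG tT by blast
      have "x = act a (c \<otimes> s)" using bs ac mul[OF asp cc(1) cc(2)] by simp
      also have "\<dots> = act a (t \<otimes> p)" using \<open>t \<otimes> p = c \<otimes> s\<close> by simp
      also have "\<dots> = act (act a t) p" using mul[OF asp tc cc(3)] by simp
      finally show ?thesis .
    qed
    have "act a t \<notin> A"
    proof
      assume "act a t \<in> A"
      hence "x \<in> B" unfolding B_def set_act_def using xe pc by blast
      thus False using x by blast
    qed
    moreover have "act a t \<in> set_act act A T" unfolding set_act_def using ac tT by blast
    ultimately have "act a t \<in> D" unfolding D_def by blast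
    hence "x \<in> set_act act D {p}" unfolding set_act_def using xe by blast
    thus "x \<in> (\<Union>p\<in>C. set_act act D {p})" using pc by blast
  qed
  have bd: "measure M (set_act act B S - B) \<le> real k * measure M D"
  proof -
    have "measure M (set_act act B S - B) \<le> measure M (\<Union>p\<in>C. set_act act D {p})"
      using incl finC CG img_sets[OF G R _ Ds]
      by (intro finite_measure_mono) auto
    also have "\<dots> \<le> (\<Sum>p\<in>C. measure M (set_act act D {p}))"
      by (rule measure_UNION_le) (use finC CG img_sets[OF G R _ Ds] in auto)
    also have "\<dots> = real (card C) * measure M D"
    proof -
      have "(\<Sum>c\<in>C. measure M (set_act act D {c})) = (\<Sum>c\<in>C. measure M D)"
        by (rule sum.cong) (use CG img_sets(2)[OF G R _ Ds] in auto)
      thus ?thesis by simp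
    qed
    also have "\<dots> \<le> real k * measure M D"
      using cardC by (intro mult_right_mono) auto
    finally show ?thesis .
  qed
  define Q where "Q = {measure M (set_act act A S - A) / measure M A | A.
       A \<in> sets M \<and> 0 < measure M A \<and> measure M A \<le> 1/2}"
  have ch: "cheeger M act S = Inf Q" unfolding cheeger_def Q_def by simp
  have Bpos: "0 < measure M B" using muB_ge Am by linarith
  have inQ: "measure M (set_act act B S - B) / measure M B \<in> Q"
    unfolding Q_def using Bs Bpos muB_half by blast
  have bdd: "bdd_below Q" unfolding Q_def by (rule bdd_belowI[of _ 0]) auto
  have h_le: "cheeger M act S \<le> measure M (set_act act B S - B) / measure M B"
    unfolding ch using cInf_lower[OF inQ bdd] .
  have h_ge: "0 \<le> cheeger M act S"
    unfolding ch using inQ by (intro cInf_greatest) (auto simp: Q_def)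
  have "cheeger M act S * measure M B \<le> measure M (set_act act B S - B)"
    using h_le Bpos by (simp add: pos_le_divide_eq)
  moreover have "cheeger M act S * measure M A \<le> cheeger M act S * measure M B"
    using mult_left_mono[OF muB_ge h_ge] .
  ultimately have key: "cheeger M act S * measure M A \<le> real k * measure M D"
    using bd by linarith
  show "cheeger M act S / real k \<le> measure M (set_act act A (NS_set G H S C) - A) / measure M A"
  proof -
    have "cheeger M act S / real k = (cheeger M act S * measure M A) / (real k * measure M A)"
      using kpos Am by simp
    also have "\<dots> \<le> (real k * measure M D) / (real k * measure M A)"
      using key kpos Am by (intro divide_right_mono) auto
    also have "\<dots> = measure M D / measure M A" using kpos by simp
    finally show ?thesis unfolding D_def T_def .
  qed
qed


theorem mainTheorem14:
  fixes G :: "('g, 'b) monoid_scheme" and M :: "'x measure" and act :: "'x \<Rightarrow> 'g \<Rightarrow> 'x"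
    and S H C :: "'g set" and k :: nat
  assumes "group G"
    and "prob_space M"
    and "right_mp_action G M act"
    and "ergodic_action G M act"
    and "finite S" and "S \<subseteq> carrier G" and "\<forall>s\<in>S. inv\<^bsub>G\<^esub> s \<in> S"
    and "generate G S = carrier G"
    and "subgroup H G"
    and "finite (rcosets\<^bsub>G\<^esub> H)" and "card (rcosets\<^bsub>G\<^esub> H) = k"
    and "right_transversal G H C"
  shows "\<forall>A\<in>sets M. 0 < measure M A \<and> measure M A \<le> 1 / (2 * real k) \<longrightarrow>
           measure M (set_act act A (NS_set G H S C) - A) / measure M A \<ge> cheeger M act S / real k"
  using main_aux[OF assms] .

end
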